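(* Consider a switching non-stationary Markov reward process as described in the context. Let $\mathcal{X}=\{(s,s',e)\in\mathcal{S}\times\mathcal{S}\times\mathcal{E}: p_e(s'\mid s)>0\}$. Then the sequence $X_k=(S_k,S_{k+1},E_k)$ is a Markov chain on $\mathcal{X}$ whose transition probability from $x=(s_1,s_2,e)$ to $x'=(s_1',s_2',e')$ is $$z(x'\mid x)=\begin{cases}p_{e'}(s_2'\mid s_2)\,q(e'\mid e)&\text{if } s_2=s_1',\\ 0&\text{otherwise.}\end{cases}$$
   Context: The process has a finite state set $\mathcal{S}$, a finite set of environment states $\mathcal{E}$, for each $e\in\mathcal{E}$ a transition probability function $p_e(s'\mid s)$ on $\mathcal{S}$, and a Markov chain on $\mathcal{E}$ with transition probabilities $q(e'\mid e)$. It generates $(S_k,E_k)_{k\ge0}$ from an arbitrary initial distribution such that, given the entire past $(S_0,E_0,\dots,S_k,E_k)$, $S_{k+1}\sim p_{E_k}(\cdot\mid S_k)$ and $E_{k+1}\sim q(\cdot\mid E_k)$ independently. *)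

theory Defs
  imports "HOL-Probability.Probability"
begin

text \<open>Transition kernels are functions: p e s s' stands for p_e(s' | s), q e e' for q(e' | e).\<close>

definition stochastic :: "('a \<Rightarrow> 'a \<Rightarrow> real) \<Rightarrow> bool" where
  "stochastic P \<longleftrightarrow> (\<forall>x y. 0 \<le> P x y) \<and> (\<forall>x. (\<Sum>y\<in>UNIV. P x y) = 1)"

definition Xset :: "('e \<Rightarrow> 's \<Rightarrow> 's \<Rightarrow> real) \<Rightarrow> ('s \<times> 's \<times> 'e) set" where
  "Xset p = {(s, s', e). p e s s' > 0}"

definition ztrans :: "('e \<Rightarrow> 's \<Rightarrow> 's \<Rightarrow> real) \<Rightarrow> ('e \<Rightarrow> 'e \<Rightarrow> real)
    \<Rightarrow> ('s \<times> 's \<times> 'e) \<Rightarrow> ('s \<times> 's \<times> 'e) \<Rightarrow> real" where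
  "ztrans p q x x' = (case x of (s1, s2, e) \<Rightarrow> case x' of (s1', s2', e') \<Rightarrow>
      if s2 = s1' then p e' s2 s2' * q e e' else 0)"

end

theory Submission
  imports Defs
begin

theorem lemma4:
  fixes M :: "'a measure"
    and p :: "'e::finite \<Rightarrow> 's::finite \<Rightarrow> 's \<Rightarrow> real"
    and q :: "'e \<Rightarrow> 'e \<Rightarrow> real"
    and S :: "nat \<Rightarrow> 'a \<Rightarrow> 's" and E :: "nat \<Rightarrow> 'a \<Rightarrow> 'e"
  assumes "prob_space M"
    and "\<And>e. stochastic (p e)" and "stochastic q"
    and "\<And>k. S k \<in> measurable M (count_space UNIV)"
    and "\<And>k. E k \<in> measurable M (count_space UNIV)"
    and "\<And>k (ss :: nat \<Rightarrow> 's) (es :: nat \<Rightarrow> 'e) s' e'.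
           measure M {\<omega> \<in> space M. (\<forall>i\<le>k. S i \<omega> = ss i \<and> E i \<omega> = es i)
                                  \<and> S (Suc k) \<omega> = s' \<and> E (Suc k) \<omega> = e'}
         = measure M {\<omega> \<in> space M. \<forall>i\<le>k. S i \<omega> = ss i \<and> E i \<omega> = es i}
             * p (es k) (ss k) s' * q (es k) e'"
  defines "X \<equiv> \<lambda>k \<omega>. (S k \<omega>, S (Suc k) \<omega>, E k \<omega>)"
  shows "(AE \<omega> in M. \<forall>k. X k \<omega> \<in> Xset p)
    \<and> (\<forall>x\<in>Xset p. (\<forall>x'. 0 \<le> ztrans p q x x') \<and> (\<Sum>x'\<in>Xset p. ztrans p q x x') = 1)
    \<and> (\<forall>k (xs :: nat \<Rightarrow> 's \<times> 's \<times> 'e) x'.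
           measure M {\<omega> \<in> space M. (\<forall>i\<le>k. X i \<omega> = xs i) \<and> X (Suc k) \<omega> = x'}
         = measure M {\<omega> \<in> space M. \<forall>i\<le>k. X i \<omega> = xs i} * ztrans p q (xs k) x')"
proof -
  interpret P: prob_space M by fact
  note [measurable] = assms(4) assms(5)
  define H where "H = (\<lambda>k (ss::nat \<Rightarrow> 's) (es::nat \<Rightarrow> 'e). {\<omega> \<in> space M. \<forall>i\<le>k. S i \<omega> = ss i \<and> E i \<omega> = es i})"
  have Hsets: "H k ss es \<in> sets M" for k ss es
    unfolding H_def by measurable
  have Hsub: "{\<omega> \<in> H k ss es. Q \<omega>} \<in> sets M" if "{\<omega> \<in> space M. Q \<omega>} \<in> sets M" for k ss es Q
  proof -
    have "{\<omega> \<in> H k ss es. Q \<omega>} = H k ss es \<inter> {\<omega> \<in> space M. Q \<omega>}" unfolding H_def by auto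
    then show ?thesis using Hsets that by auto
  qed
  have hyp: "measure M {\<omega> \<in> H k ss es. S (Suc k) \<omega> = s' \<and> E (Suc k) \<omega> = e'}
      = measure M (H k ss es) * p (es k) (ss k) s' * q (es k) e'" for k ss es s' e'
    using assms(6)[of k ss es s' e'] unfolding H_def by (simp add: conj_assoc)
  have A: "measure M {\<omega> \<in> H k ss es. S (Suc k) \<omega> = s'}
      = measure M (H k ss es) * p (es k) (ss k) s'" for k ss es s'
  proof -
    have "{\<omega> \<in> H k ss es. S (Suc k) \<omega> = s'}
        = (\<Union>e'\<in>UNIV. {\<omega> \<in> H k ss es. S (Suc k) \<omega> = s' \<and> E (Suc k) \<omega> = e'})" by auto
    then have "measure M {\<omega> \<in> H k ss es. S (Suc k) \<omega> = s'}
        = (\<Sum>e'\<in>UNIV. measure M {\<omega> \<in> H k ss es. S (Suc k) \<omega> = s' \<and> E (Suc k) \<omega> = e'})"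
      by (simp only:) (rule P.finite_measure_finite_Union, auto intro!: Hsub simp: disjoint_family_on_def)
    also have "\<dots> = (\<Sum>e'\<in>UNIV. measure M (H k ss es) * p (es k) (ss k) s' * q (es k) e')"
      by (simp add: hyp)
    also have "\<dots> = measure M (H k ss es) * p (es k) (ss k) s' * (\<Sum>e'\<in>UNIV. q (es k) e')"
      by (simp add: sum_distrib_left)
    also have "\<dots> = measure M (H k ss es) * p (es k) (ss k) s'"
      using assms(3) unfolding stochastic_def by simp
    finally show ?thesis .
  qed
  have part1: "AE \<omega> in M. \<forall>k. X k \<omega> \<in> Xset p"
  proof (subst AE_all_countable, intro allI)
    fix k :: nat
    define F where "F = (\<Pi>\<^sub>E i\<in>{..k}. (UNIV :: 's set))"
    define G where "G = (\<Pi>\<^sub>E i\<in>{..k}. (UNIV :: 'e set))"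
    define I where "I = {(f, g, s'). f \<in> F \<and> g \<in> G \<and> p (g k) (f k) s' = 0}"
    define Z where "Z = (\<lambda>(f, g, s'). {\<omega> \<in> H k f g. S (Suc k) \<omega> = s'})"
    have "finite I"
    proof (rule finite_subset)
      show "I \<subseteq> F \<times> G \<times> UNIV" by (auto simp: I_def)
      show "finite (F \<times> G \<times> (UNIV :: 's set))"
        unfolding F_def G_def by (intro finite_SigmaI finite_PiE) auto
    qed
    have null: "(\<Union>i\<in>I. Z i) \<in> null_sets M"
    proof (rule null_sets_UN')
      show "countable I" using \<open>finite I\<close> by (rule countable_finite)
    next
      fix i assume "i \<in> I"
      then obtain f g s' where i: "i = (f, g, s')" "p (g k) (f k) s' = 0" by (auto simp: I_def)
      have zs: "Z i \<in> sets M" unfolding i Z_def by (auto intro!: Hsub)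
      have "measure M (Z i) = 0" unfolding i Z_def using A[of k f g s'] i by simp
      then show "Z i \<in> null_sets M" using zs by (simp add: P.emeasure_eq_measure null_sets_def)
    qed
    show "AE \<omega> in M. X k \<omega> \<in> Xset p"
    proof (rule AE_I'[OF null], safe)
      fix \<omega> assume w: "\<omega> \<in> space M" "X k \<omega> \<notin> Xset p"
      define f where "f = restrict (\<lambda>i. S i \<omega>) {..k}"
      define g where "g = restrict (\<lambda>i. E i \<omega>) {..k}"
      have p0: "0 \<le> p e a b" for e a b using assms(2)[of e] unfolding stochastic_def by auto
      have "p (E k \<omega>) (S k \<omega>) (S (Suc k) \<omega>) = 0"
        using w(2) p0[of "E k \<omega>" "S k \<omega>" "S (Suc k) \<omega>"] by (auto simp: X_def Xset_def)
      then have "(f, g, S (Suc k) \<omega>) \<in> I" by (simp add: I_def F_def G_def f_def g_def)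
      moreover have "\<omega> \<in> Z (f, g, S (Suc k) \<omega>)" using w(1) by (simp add: Z_def H_def f_def g_def)
      ultimately show "\<omega> \<in> (\<Union>i\<in>I. Z i)" by blast
    qed
  qed
  have part2: "\<forall>x\<in>Xset p. (\<forall>x'. 0 \<le> ztrans p q x x') \<and> (\<Sum>x'\<in>Xset p. ztrans p q x x') = 1"
  proof
    fix x assume "x \<in> Xset p"
    obtain s1 s2 e where x: "x = (s1, s2, e)" by (cases x) auto
    have p0: "0 \<le> p e a b" for e a b using assms(2)[of e] unfolding stochastic_def by auto
    have q0: "0 \<le> q a b" for a b using assms(3) unfolding stochastic_def by auto
    have nn: "0 \<le> ztrans p q x x'" for x'
      by (cases x') (auto simp: x ztrans_def p0 q0)
    have "(\<Sum>x'\<in>Xset p. ztrans p q x x') = (\<Sum>x'\<in>UNIV. ztrans p q x x')"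
    proof (rule sum.mono_neutral_left)
      show "\<forall>i\<in>UNIV - Xset p. ztrans p q x i = 0"
      proof
        fix i assume "i \<in> UNIV - Xset p"
        then obtain a b c where i: "i = (a,b,c)" "\<not> p c a b > 0" by (cases i) (auto simp: Xset_def)
        then have "p c a b = 0" using p0[of c a b] by auto
        then show "ztrans p q x i = 0" by (auto simp: i x ztrans_def)
      qed
    qed auto
    also have "\<dots> = (\<Sum>a\<in>UNIV. \<Sum>b\<in>UNIV. \<Sum>c\<in>UNIV. ztrans p q x (a,b,c))"
      by (simp add: sum.cartesian_product UNIV_Times_UNIV[symmetric] del: UNIV_Times_UNIV)
    also have "\<dots> = (\<Sum>a\<in>UNIV. if s2 = a then (\<Sum>b\<in>UNIV. \<Sum>c\<in>UNIV. p c a b * q e c) else 0)"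
      by (rule sum.cong[OF refl]) (auto simp: x ztrans_def)
    also have "\<dots> = (\<Sum>b\<in>UNIV. \<Sum>c\<in>UNIV. p c s2 b * q e c)"
      by simp
    also have "\<dots> = (\<Sum>c\<in>UNIV. q e c * (\<Sum>b\<in>UNIV. p c s2 b))"
      by (subst sum.swap) (simp add: sum_distrib_left mult.commute)
    also have "\<dots> = 1"
      using assms(2,3) unfolding stochastic_def by simp
    finally show "(\<forall>x'. 0 \<le> ztrans p q x x') \<and> (\<Sum>x'\<in>Xset p. ztrans p q x x') = 1"
      using nn by simp
  qed
  have part3: "measure M {\<omega> \<in> space M. (\<forall>i\<le>k. X i \<omega> = xs i) \<and> X (Suc k) \<omega> = x'}
         = measure M {\<omega> \<in> space M. \<forall>i\<le>k. X i \<omega> = xs i} * ztrans p q (xs k) x'"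
    for k and xs :: "nat \<Rightarrow> 's \<times> 's \<times> 'e" and x'
  proof -
    define a where "a = (\<lambda>i. fst (xs i))"
    define b where "b = (\<lambda>i. fst (snd (xs i)))"
    define c where "c = (\<lambda>i. snd (snd (xs i)))"
    have xs: "xs i = (a i, b i, c i)" for i by (simp add: a_def b_def c_def)
    obtain a' b' e' where x': "x' = (a', b', e')" by (cases x') auto
    have Xeq: "X i \<omega> = xs i \<longleftrightarrow> S i \<omega> = a i \<and> S (Suc i) \<omega> = b i \<and> E i \<omega> = c i" for i \<omega>
      by (auto simp: X_def xs)
    show ?thesis
    proof (cases "\<forall>i<k. b i = a (Suc i)")
      case False
      then obtain j where j: "j < k" "b j \<noteq> a (Suc j)" by auto
      have e1: "{\<omega> \<in> space M. \<forall>i\<le>k. X i \<omega> = xs i} = {}"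
      proof -
        { fix \<omega> assume "\<forall>i\<le>k. X i \<omega> = xs i"
          then have "X j \<omega> = xs j" "X (Suc j) \<omega> = xs (Suc j)" using j by auto
          then have False using j by (simp add: Xeq) }
        then show ?thesis by auto
      qed
      have e2: "{\<omega> \<in> space M. (\<forall>i\<le>k. X i \<omega> = xs i) \<and> X (Suc k) \<omega> = x'} = {}"
        using e1 by auto
      show ?thesis by (simp add: e1 e2)
    next
      case True
      have ev: "{\<omega> \<in> space M. \<forall>i\<le>k. X i \<omega> = xs i} = {\<omega> \<in> H k a c. S (Suc k) \<omega> = b k}"
      proof (intro set_eqI iffI)
        fix \<omega> assume "\<omega> \<in> {\<omega> \<in> space M. \<forall>i\<le>k. X i \<omega> = xs i}"
        then show "\<omega> \<in> {\<omega> \<in> H k a c. S (Suc k) \<omega> = b k}"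
          by (auto simp: H_def Xeq)
      next
        fix \<omega> assume w: "\<omega> \<in> {\<omega> \<in> H k a c. S (Suc k) \<omega> = b k}"
        have "X i \<omega> = xs i" if "i \<le> k" for i
        proof (cases "i < k")
          case True
          then show ?thesis using w \<open>\<forall>i<k. b i = a (Suc i)\<close> that by (auto simp: H_def Xeq)
        next
          case False
          then have "i = k" using that by simp
          then show ?thesis using w by (auto simp: H_def Xeq)
        qed
        then show "\<omega> \<in> {\<omega> \<in> space M. \<forall>i\<le>k. X i \<omega> = xs i}" using w by (auto simp: H_def)
      qed
      have rhs: "measure M {\<omega> \<in> space M. \<forall>i\<le>k. X i \<omega> = xs i} = measure M (H k a c) * p (c k) (a k) (b k)"
        unfolding ev by (rule A)
      show ?thesis
      proof (cases "a' = b k")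
        case False
        have em: "{\<omega> \<in> space M. (\<forall>i\<le>k. X i \<omega> = xs i) \<and> X (Suc k) \<omega> = x'} = {}"
          using False by (force simp: x' X_def xs)
        have "ztrans p q (xs k) x' = 0" using False by (simp add: ztrans_def xs x')
        then show ?thesis by (simp only: em) simp
      next
        case True
        define ss where "ss = a(Suc k := b k)"
        define es where "es = c(Suc k := e')"
        have HS: "H (Suc k) ss es = {\<omega> \<in> H k a c. S (Suc k) \<omega> = b k \<and> E (Suc k) \<omega> = e'}"
          by (auto simp: H_def ss_def es_def le_Suc_eq)
        have "{\<omega> \<in> space M. (\<forall>i\<le>k. X i \<omega> = xs i) \<and> X (Suc k) \<omega> = x'}
            = {\<omega> \<in> H (Suc k) ss es. S (Suc (Suc k)) \<omega> = b'}"
          unfolding HS using ev True by (auto simp: x' X_def)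
        then have "measure M {\<omega> \<in> space M. (\<forall>i\<le>k. X i \<omega> = xs i) \<and> X (Suc k) \<omega> = x'}
            = measure M (H (Suc k) ss es) * p e' (b k) b'"
          using A[of "Suc k" ss es b'] by (simp add: ss_def es_def)
        also have "measure M (H (Suc k) ss es) = measure M (H k a c) * p (c k) (a k) (b k) * q (c k) e'"
          unfolding HS by (rule hyp)
        finally show ?thesis using True rhs by (simp add: ztrans_def xs x')
      qed
    qed
  qed
  show ?thesis using part1 part2 part3 by blast
qed

end
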